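(* Let $E$ be an ordered normed space and $n\ge1$. Then for every $\mathbf{x}\in E^{\otimes n}$, $\|\mathbf{x}\|_{\pi+,E}=\|\mathbf{x}\|_{\pi,E^+}$; that is, the positive projective norm $\|\cdot\|_{\pi+}$ on $E^{\otimes n}$ coincides with the (ordinary) projective tensor norm of the normed space $E^+$.
   Context: All vector spaces are real. An ordered normed space is a real normed space $E$ together with a closed convex cone $E_+\subseteq E$ (its elements are called positive, written $x\ge0$) such that $E=E_+-E_+$ and such that, writing $\|x\|_+:=\inf\{\|y\|+\|z\|: x=y-z,\ y,z\in E_+\}$, the constant $c_+(E):=\sup\{\|x\|_+:\|x\|\le1\}$ is finite. $E^+$ denotes the vector space $E$ equipped with the norm $\|\cdot\|_+$. $E^{\otimes n}$ is the algebraic $n$-th tensor power of $E$. For a normed space $F$, the projective norm on $F^{\otimes n}$ is $\|\mathbf{x}\|_{\pi,F}:=\inf\{\sum_{k=1}^N|a_k|\,\|x_{1k}\|\cdots\|x_{nk}\| : \mathbf{x}=\sum_{k=1}^N a_k\,x_{1k}\otimes\cdots\otimes x_{nk},\ a_k\in\mathbb{R},\ x_{ik}\in F\}$. The positive projective norm on $E^{\otimes n}$ is $\|\mathbf{x}\|_{\pi+,E}:=\inf\{\sum_{k=1}^N|a_k|\,\|x_{1k}\|\cdots\|x_{nk}\| : \mathbf{x}=\sum_{k=1}^N a_k\,x_{1k}\otimes\cdots\otimes x_{nk},\ a_k\in\mathbb{R},\ x_{ik}\in E_+\}$ (norms $\|\cdot\|$ of $E$). *)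

theory Defs
  imports "HOL-Analysis.Analysis"
begin

text \<open>An ordered normed space: a real normed space together with a closed convex cone C
  of positive elements, such that E = C - C and c_+(E) is finite.\<close>

definition norm_plus :: "'a::real_normed_vector set \<Rightarrow> 'a \<Rightarrow> real" where
  "norm_plus C x = Inf {norm y + norm z | y z. y \<in> C \<and> z \<in> C \<and> x = y - z}"

definition ordered_normed_space :: "'a::real_normed_vector set \<Rightarrow> bool" where
  "ordered_normed_space C \<longleftrightarrow>
     closed C \<and> convex_cone C \<and>
     (\<forall>x. \<exists>y z. y \<in> C \<and> z \<in> C \<and> x = y - z) \<and>
     bdd_above {norm_plus C x | x. norm x \<le> 1}"

text \<open>A tensor is given by a finite formal sum
  \<open>\<Sum>k a_k x_{1k} \<otimes> ... \<otimes> x_{nk}\<close>, encoded as a list of pairs (a_k, [x_{1k},...,x_{nk}]).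
  Two such sums denote the same element of E^{\<otimes>n} iff every n-linear form takes
  the same value on them (universal property: the n-linear forms are exactly the
  linear functionals on E^{\<otimes>n}, and these separate points).\<close>

definition multilinear_form :: "nat \<Rightarrow> ('a::real_vector list \<Rightarrow> real) \<Rightarrow> bool" where
  "multilinear_form n \<phi> \<longleftrightarrow>
     (\<forall>xs i u v (a::real) b. length xs = n \<longrightarrow> i < n \<longrightarrow>
        \<phi> (xs[i := a *\<^sub>R u + b *\<^sub>R v]) = a * \<phi> (xs[i := u]) + b * \<phi> (xs[i := v]))"

definition tensor_rep :: "nat \<Rightarrow> (real \<times> 'a list) list \<Rightarrow> bool" where
  "tensor_rep n R \<longleftrightarrow> (\<forall>(a, xs) \<in> set R. length xs = n)"

definition tensor_eval :: "('a list \<Rightarrow> real) \<Rightarrow> (real \<times> 'a list) list \<Rightarrow> real" where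
  "tensor_eval \<phi> R = (\<Sum>(a, xs) \<leftarrow> R. a * \<phi> xs)"

definition tensor_eq :: "nat \<Rightarrow> (real \<times> 'a::real_vector list) list \<Rightarrow> (real \<times> 'a list) list \<Rightarrow> bool" where
  "tensor_eq n R S \<longleftrightarrow> (\<forall>\<phi>. multilinear_form n \<phi> \<longrightarrow> tensor_eval \<phi> R = tensor_eval \<phi> S)"

definition rep_cost :: "('a \<Rightarrow> real) \<Rightarrow> (real \<times> 'a list) list \<Rightarrow> real" where
  "rep_cost N R = (\<Sum>(a, xs) \<leftarrow> R. \<bar>a\<bar> * prod_list (map N xs))"

text \<open>Projective norm on F^{\<otimes>n} where F is E with the norm N, evaluated at the tensor
  represented by R.\<close>
definition proj_norm :: "('a::real_vector \<Rightarrow> real) \<Rightarrow> nat \<Rightarrow> (real \<times> 'a list) list \<Rightarrow> real" where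
  "proj_norm N n R = Inf {rep_cost N S | S. tensor_rep n S \<and> tensor_eq n S R}"

definition pos_proj_norm :: "'a::real_normed_vector set \<Rightarrow> nat \<Rightarrow> (real \<times> 'a list) list \<Rightarrow> real" where
  "pos_proj_norm C n R = Inf {rep_cost norm S | S. tensor_rep n S \<and>
       (\<forall>(a, xs) \<in> set S. set xs \<subseteq> C) \<and> tensor_eq n S R}"

end

theory Submission
  imports Defs
begin

fun expand :: "real \<Rightarrow> ('a \<times> 'a) list \<Rightarrow> (real \<times> 'a list) list" where
  "expand a [] = [(a, [])]"
| "expand a ((y,z)#ps) = map (\<lambda>(b,ws). (b, y#ws)) (expand a ps) @ map (\<lambda>(b,ws). (-b, z#ws)) (expand a ps)"

lemma eval_append: "tensor_eval \<phi> (A @ B) = tensor_eval \<phi> A + tensor_eval \<phi> B"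
  by (simp add: tensor_eval_def)

lemma eval_cons_map: "tensor_eval \<phi> (map (\<lambda>(b,ws). (b, y#ws)) E) = tensor_eval (\<lambda>ws. \<phi> (y#ws)) E"
  by (induction E) (auto simp: tensor_eval_def)

lemma eval_neg_map: "tensor_eval \<phi> (map (\<lambda>(b,ws). (-b, y#ws)) E) = - tensor_eval (\<lambda>ws. \<phi> (y#ws)) E"
  by (induction E) (auto simp: tensor_eval_def)

lemma cost_append: "rep_cost N (A @ B) = rep_cost N A + rep_cost N B"
  by (simp add: rep_cost_def)

lemma cost_cons_map: "rep_cost N (map (\<lambda>(b,ws). (b, y#ws)) E) = N y * rep_cost N E"
  by (induction E) (auto simp: rep_cost_def algebra_simps)

lemma cost_neg_map: "rep_cost N (map (\<lambda>(b,ws). (-b, y#ws)) E) = N y * rep_cost N E"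
  by (induction E) (auto simp: rep_cost_def algebra_simps)

lemma ml_tail: "multilinear_form (Suc m) \<phi> \<Longrightarrow> multilinear_form m (\<lambda>ws. \<phi> (y#ws))"
  unfolding multilinear_form_def
proof (intro allI impI)
  fix xs i u v a b
  assume h: "\<forall>xs i u v (a::real) b. length xs = Suc m \<longrightarrow> i < Suc m \<longrightarrow>
        \<phi> (xs[i := a *\<^sub>R u + b *\<^sub>R v]) = a * \<phi> (xs[i := u]) + b * \<phi> (xs[i := v])"
    and l: "length (xs::'a list) = m" and i: "i < m"
  show "\<phi> (y # xs[i := a *\<^sub>R u + b *\<^sub>R v]) = a * \<phi> (y # xs[i := u]) + b * \<phi> (y # xs[i := v])"
    using h[rule_format, of "y#xs" "Suc i" a u b v] l i by simp
qed

lemma ml_head: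
  assumes "multilinear_form (Suc m) \<phi>" "length d = m"
  shows "\<phi> ((y - z)#d) = \<phi> (y#d) - \<phi> (z#d)"
  using assms unfolding multilinear_form_def
  apply (erule_tac x="y#d" in allE)
  apply (erule_tac x=0 in allE)
  apply (erule_tac x=y in allE)
  apply (erule_tac x=z in allE)
  apply (erule_tac x=1 in allE)
  apply (erule_tac x="-1" in allE)
  by simp

lemma expand_eval:
  "multilinear_form n \<phi> \<Longrightarrow> length ps = n \<Longrightarrow>
   tensor_eval \<phi> (expand a ps) = a * \<phi> (map (\<lambda>(y,z). y - z) ps)"
proof (induction ps arbitrary: n \<phi>)
  case Nil
  then show ?case by (simp add: tensor_eval_def)
next
  case (Cons p ps)
  obtain y z where p: "p = (y,z)" by force
  obtain m where n: "n = Suc m" using Cons.prems by (cases n) auto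
  have lm: "length ps = m" using Cons.prems n by simp
  have "tensor_eval \<phi> (expand a (p#ps)) =
      a * \<phi> (y # map (\<lambda>(y,z). y - z) ps) - a * \<phi> (z # map (\<lambda>(y,z). y - z) ps)"
    using Cons.IH[OF ml_tail[OF Cons.prems(1)[unfolded n]] lm]
    by (simp add: p eval_append eval_cons_map eval_neg_map)
  also have "\<dots> = a * \<phi> (map (\<lambda>(y,z). y - z) (p#ps))"
  proof -
    have h: "\<phi> ((y - z) # map (\<lambda>(y,z). y - z) ps) = \<phi> (y # map (\<lambda>(y,z). y - z) ps) - \<phi> (z # map (\<lambda>(y,z). y - z) ps)"
      using ml_head[OF Cons.prems(1)[unfolded n], of "map (\<lambda>(y,z). y - z) ps" y z] lm by simp
    show ?thesis by (simp only: p list.map prod.case h right_diff_distrib)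
  qed
  finally show ?case .
qed

lemma expand_cost:
  "rep_cost norm (expand a ps) = \<bar>a\<bar> * prod_list (map (\<lambda>(y,z). norm y + norm z) ps)"
proof (induction ps)
  case Nil
  then show ?case by (simp add: rep_cost_def)
next
  case (Cons p ps)
  then show ?case
    by (cases p) (simp add: cost_append cost_cons_map cost_neg_map algebra_simps)
qed

lemma expand_rep: "length ps = n \<Longrightarrow> tensor_rep n (expand a ps)"
proof (induction ps arbitrary: n)
  case Nil
  then show ?case by (simp add: tensor_rep_def)
next
  case (Cons p ps)
  then show ?case
    by (cases p; cases n) (auto simp: tensor_rep_def)
qed

lemma expand_pos: "\<forall>(y,z)\<in>set ps. y \<in> C \<and> z \<in> C \<Longrightarrow> \<forall>(b,ws)\<in>set (expand a ps). set ws \<subseteq> C"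
proof (induction ps)
  case Nil
  then show ?case by simp
next
  case (Cons p ps)
  then show ?case
    by (cases p) (force split: prod.splits)
qed

lemma prod_list_mono_aux:
  fixes f h :: "'b \<Rightarrow> real"
  shows "(\<forall>x\<in>set xs. 0 \<le> f x \<and> f x \<le> h x) \<Longrightarrow> prod_list (map f xs) \<le> prod_list (map h xs)"
proof (induction xs)
  case Nil
  then show ?case by simp
next
  case (Cons x xs)
  have "0 \<le> prod_list (map f xs)" using Cons.prems by (intro prod_list_nonneg) auto
  then show ?case using Cons by (auto intro!: mult_mono)
qed

lemma rep_cost_nonneg: "(\<And>x. 0 \<le> N x) \<Longrightarrow> 0 \<le> rep_cost N S"
  unfolding rep_cost_def
  by (rule sum_list_nonneg) (auto intro!: prod_list_nonneg mult_nonneg_nonneg)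

lemma rep_cost_mono:
  assumes "\<forall>(a,xs)\<in>set S. \<forall>x\<in>set xs. 0 \<le> N x \<and> N x \<le> M x"
  shows "rep_cost N S \<le> rep_cost M S"
  unfolding rep_cost_def
  using assms
  by (intro sum_list_mono) (auto intro!: mult_left_mono prod_list_mono_aux)

definition expandall :: "('a \<Rightarrow> 'a \<times> 'a) \<Rightarrow> (real \<times> 'a list) list \<Rightarrow> (real \<times> 'a list) list" where
  "expandall g S = concat (map (\<lambda>(a,xs). expand a (map g xs)) S)"

lemma expandall_props:
  assumes g: "\<And>x. fst (g x) \<in> C \<and> snd (g x) \<in> C \<and> x = fst (g x) - snd (g x)"
    and S: "tensor_rep n S"
  shows "tensor_rep n (expandall g S)"
    "\<forall>(b,ws)\<in>set (expandall g S). set ws \<subseteq> C"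
    "multilinear_form n \<phi> \<Longrightarrow> tensor_eval \<phi> (expandall g S) = tensor_eval \<phi> S"
    "rep_cost norm (expandall g S) =
       rep_cost (\<lambda>x. norm (fst (g x)) + norm (snd (g x))) S"
proof -
  show "tensor_rep n (expandall g S)"
    using S unfolding expandall_def
  proof (induction S)
    case Nil then show ?case by (simp add: tensor_rep_def)
  next
    case (Cons s S)
    have "tensor_rep n (expand (fst s) (map g (snd s)))"
      using Cons.prems by (intro expand_rep) (auto simp: tensor_rep_def split: prod.splits)
    then show ?case using Cons by (cases s) (auto simp: tensor_rep_def)
  qed
  show "\<forall>(b,ws)\<in>set (expandall g S). set ws \<subseteq> C"
    unfolding expandall_def
  proof (induction S)
    case Nil then show ?case by simp
  next
    case (Cons s S)
    have "\<forall>(b,ws)\<in>set (expand (fst s) (map g (snd s))). set ws \<subseteq> C"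
      using g by (intro expand_pos) (auto simp: case_prod_beta)
    then show ?case using Cons by (cases s) (fastforce split: prod.splits)
  qed
  have mg: "map (\<lambda>(y,z). y - z) (map g xs) = xs" for xs
  proof -
    have "map (\<lambda>(y,z). y - z) (map g xs) = map (\<lambda>x. fst (g x) - snd (g x)) xs"
      by (simp add: case_prod_beta)
    also have "\<dots> = xs" using g by (induction xs) auto
    finally show ?thesis .
  qed
  show "tensor_eval \<phi> (expandall g S) = tensor_eval \<phi> S" if ml: "multilinear_form n \<phi>"
    using S unfolding expandall_def
  proof (induction S)
    case Nil then show ?case by (simp add: tensor_eval_def)
  next
    case (Cons s S)
    obtain a xs where s: "s = (a,xs)" by force
    have "length xs = n" using Cons.prems s by (simp add: tensor_rep_def)
    then have "tensor_eval \<phi> (expand a (map g xs)) = a * \<phi> xs"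
      using expand_eval[OF ml, of "map g xs" a] mg by simp
    moreover have "tensor_rep n S" using Cons.prems by (simp add: tensor_rep_def)
    ultimately show ?case using Cons.IH s
      by (simp add: eval_append) (simp add: tensor_eval_def)
  qed
  show "rep_cost norm (expandall g S) = rep_cost (\<lambda>x. norm (fst (g x)) + norm (snd (g x))) S"
    unfolding expandall_def
  proof (induction S)
    case Nil then show ?case by (simp add: rep_cost_def)
  next
    case (Cons s S)
    obtain a xs where s: "s = (a,xs)" by force
    have "map (\<lambda>(y,z). norm y + norm z) (map g xs) = map (\<lambda>x. norm (fst (g x)) + norm (snd (g x))) xs"
      by (simp add: case_prod_beta)
    then show ?case using Cons.IH s
      by (simp add: cost_append expand_cost) (simp add: rep_cost_def o_def case_prod_beta)
  qed
qed

lemma tendsto_prod_list: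
  "((\<lambda>d. prod_list (map (\<lambda>x. N x + d) xs)) \<longlongrightarrow> prod_list (map N xs)) (at_right (0::real))"
proof (induction xs)
  case Nil then show ?case by simp
next
  case (Cons x xs)
  have "((\<lambda>d. N x + d) \<longlongrightarrow> N x + 0) (at_right (0::real))"
    by (intro tendsto_intros)
  then show ?case using Cons by (simp add: tendsto_mult)
qed

lemma tendsto_rep_cost:
  "((\<lambda>d. rep_cost (\<lambda>x. N x + d) S) \<longlongrightarrow> rep_cost N S) (at_right (0::real))"
proof (induction S)
  case Nil then show ?case by (simp add: rep_cost_def)
next
  case (Cons s S)
  obtain a xs where s: "s = (a,xs)" by force
  have "((\<lambda>d. \<bar>a\<bar> * prod_list (map (\<lambda>x. N x + d) xs) + rep_cost (\<lambda>x. N x + d) S)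
     \<longlongrightarrow> \<bar>a\<bar> * prod_list (map N xs) + rep_cost N S) (at_right (0::real))"
    by (intro tendsto_intros tendsto_prod_list Cons.IH)
  then show ?case using s by (simp add: rep_cost_def)
qed

theorem lemma4p4:
  fixes C :: "'a::real_normed_vector set" and n :: nat and R :: "(real \<times> 'a list) list"
  assumes "ordered_normed_space C"
    and "n \<ge> 1"
    and "tensor_rep n R"
  shows "pos_proj_norm C n R = proj_norm (norm_plus C) n R"
proof -
  define N where "N = norm_plus C"
  have cone: "convex_cone C" and dec: "\<And>x. \<exists>y z. y \<in> C \<and> z \<in> C \<and> x = y - z"
    using assms(1) unfolding ordered_normed_space_def by auto
  have zC: "0 \<in> C" using cone by (rule convex_cone_contains_0)
  define Sx where "Sx x = {norm y + norm z | y z. y \<in> C \<and> z \<in> C \<and> x = y - z}" for x :: 'a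
  have Sne: "Sx x \<noteq> {}" for x using dec[of x] unfolding Sx_def by blast
  have Sbdd: "bdd_below (Sx x)" for x unfolding Sx_def by (rule bdd_belowI[of _ 0]) auto
  have Nx: "N x = Inf (Sx x)" for x unfolding N_def norm_plus_def Sx_def by simp
  have N0: "0 \<le> N x" for x unfolding Nx using Sne by (rule cInf_greatest) (auto simp: Sx_def)
  have Nle: "N x \<le> norm x" if "x \<in> C" for x
  proof -
    have "norm x \<in> Sx x" unfolding Sx_def using that zC by force
    then show ?thesis unfolding Nx using Sbdd by (rule cInf_lower)
  qed
  have gex: "\<exists>p. fst p \<in> C \<and> snd p \<in> C \<and> x = fst p - snd p \<and> norm (fst p) + norm (snd p) < N x + d"
    if "d > 0" for x d
  proof -
    have "Inf (Sx x) < N x + d" using that Nx by simp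
    from cInf_lessD[OF Sne this] obtain s where "s \<in> Sx x" "s < N x + d" by blast
    then show ?thesis unfolding Sx_def by force
  qed
  define g where "g d x = (SOME p. fst p \<in> C \<and> snd p \<in> C \<and> x = fst p - snd p \<and>
      norm (fst p) + norm (snd p) < N x + d)" for d x
  have g: "fst (g d x) \<in> C \<and> snd (g d x) \<in> C \<and> x = fst (g d x) - snd (g d x) \<and>
      norm (fst (g d x)) + norm (snd (g d x)) < N x + d" if "d > 0" for d x
    unfolding g_def by (rule someI_ex) (rule gex[OF that])
  define P where "P = {rep_cost N S | S. tensor_rep n S \<and> tensor_eq n S R}"
  define Q where "Q = {rep_cost norm S | S. tensor_rep n S \<and>
       (\<forall>(a, xs) \<in> set S. set xs \<subseteq> C) \<and> tensor_eq n S R}"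
  have pos: "pos_proj_norm C n R = Inf Q" unfolding pos_proj_norm_def Q_def by simp
  have proj: "proj_norm (norm_plus C) n R = Inf P" unfolding proj_norm_def P_def N_def by simp
  have Qbdd: "bdd_below Q" unfolding Q_def
    by (rule bdd_belowI[of _ 0]) (auto intro: rep_cost_nonneg)
  have Pbdd: "bdd_below P" unfolding P_def
    by (rule bdd_belowI[of _ 0]) (auto intro: rep_cost_nonneg N0)
  have Pne: "P \<noteq> {}" unfolding P_def using assms(3) by (auto simp: tensor_eq_def)
  have key: "Inf Q \<le> rep_cost (\<lambda>x. N x + d) S" if "d > 0" "tensor_rep n S" "tensor_eq n S R" for d S
  proof -
    note props = expandall_props[of "g d" C, OF _ that(2)]
    have gg: "fst (g d x) \<in> C \<and> snd (g d x) \<in> C \<and> x = fst (g d x) - snd (g d x)" for x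
      using g[OF that(1)] by blast
    have "rep_cost norm (expandall (g d) S) \<in> Q"
      unfolding Q_def using props(1,2)[OF gg] props(3)[OF gg] that(3)
      by (auto simp: tensor_eq_def)
    then have "Inf Q \<le> rep_cost norm (expandall (g d) S)" using Qbdd by (rule cInf_lower)
    also have "\<dots> = rep_cost (\<lambda>x. norm (fst (g d x)) + norm (snd (g d x))) S"
      using props(4)[OF gg] .
    also have "\<dots> \<le> rep_cost (\<lambda>x. N x + d) S"
      using g[OF that(1)] by (intro rep_cost_mono) (auto intro: less_imp_le)
    finally show ?thesis .
  qed
  have Qne: "Q \<noteq> {}"
  proof -
    have "Inf Q \<le> rep_cost (\<lambda>x. N x + 1) R" by (rule key) (auto simp: assms(3) tensor_eq_def)
    note props = expandall_props[of "g 1" C, OF _ assms(3)]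
    have gg: "fst (g 1 x) \<in> C \<and> snd (g 1 x) \<in> C \<and> x = fst (g 1 x) - snd (g 1 x)" for x
      using g[of 1] by simp
    have "rep_cost norm (expandall (g 1) R) \<in> Q"
      unfolding Q_def using props(1,2)[OF gg] props(3)[OF gg]
      by (auto simp: tensor_eq_def)
    then show ?thesis by blast
  qed
  have le1: "Inf Q \<le> Inf P"
  proof (rule cInf_greatest[OF Pne])
    fix p assume "p \<in> P"
    then obtain S where S: "p = rep_cost N S" "tensor_rep n S" "tensor_eq n S R"
      unfolding P_def by blast
    have "((\<lambda>d. rep_cost (\<lambda>x. N x + d) S) \<longlongrightarrow> rep_cost N S) (at_right (0::real))"
      by (rule tendsto_rep_cost)
    moreover have "eventually (\<lambda>d. Inf Q \<le> rep_cost (\<lambda>x. N x + d) S) (at_right (0::real))"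
      by (rule eventually_mono[OF eventually_at_right_less]) (rule key[OF _ S(2,3)])
    ultimately show "Inf Q \<le> p" using S(1)
      by (auto intro: tendsto_lowerbound)
  qed
  have le2: "Inf P \<le> Inf Q"
  proof (rule cInf_greatest[OF Qne])
    fix q assume "q \<in> Q"
    then obtain S where S: "q = rep_cost norm S" "tensor_rep n S" "\<forall>(a, xs) \<in> set S. set xs \<subseteq> C"
      "tensor_eq n S R" unfolding Q_def by blast
    have "rep_cost N S \<in> P" unfolding P_def using S by auto
    then have "Inf P \<le> rep_cost N S" using Pbdd by (rule cInf_lower)
    also have "\<dots> \<le> rep_cost norm S"
      using S(3) N0 Nle by (intro rep_cost_mono) (fastforce split: prod.splits)
    finally show "Inf P \<le> q" using S(1) by simp
  qed
  show ?thesis unfolding pos proj using le1 le2 by simp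
qed

end
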